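(* Let $A$ be admissible and $\ell>0$ with $A(x)=A_\infty$ for all $x>\ell$. Let $\phi\in C_c^\infty(\mathbb{R})$ with $\operatorname{supp}\phi\subset(0,\infty)$ and let $u=u_\phi\in C^\infty([0,\infty)\times\mathbb{R})$ satisfy $\square_Au=0$ in $(0,\infty)\times\mathbb{R}$, $\partial_xu(0,t)=\phi(t)$ for $t\in\mathbb{R}$, and $u=0$ in $(0,\infty)\times(-\infty,0)$. Then there are constants $C,C'>0$ such that $$|u(0,t)-c(t)|\le Ce^{-C't}\quad\text{for all }t\in\mathbb{R},\qquad c(t):=-\frac{1}{A_\infty}\int_0^t\phi(s)\,ds.$$
   Context: A function $A:\mathbb{R}\to\mathbb{R}$ is admissible if $A\in C^\infty(\mathbb{R})$, $A>0$, and there are $x_+>x_->0$ and $A_\infty>0$ with $A(x)=1$ for $x<x_-$ and $A(x)=A_\infty$ for $x>x_+$. $\square_Au:=\partial_t^2u-\frac{1}{A(x)}\partial_x(A(x)\partial_xu)$. *)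

theory Defs
  imports "HOL-Analysis.Analysis"
begin

definition smooth_real :: "(real \<Rightarrow> real) \<Rightarrow> bool" where
  "smooth_real f \<longleftrightarrow> (\<forall>k x. ((deriv ^^ k) f) differentiable (at x))"

fun Ck_plane :: "nat \<Rightarrow> (real \<times> real \<Rightarrow> real) \<Rightarrow> bool" where
  "Ck_plane 0 f = continuous_on UNIV f"
| "Ck_plane (Suc k) f = (\<exists>f1 f2.
      (\<forall>p. (f has_derivative (\<lambda>h. f1 p * fst h + f2 p * snd h)) (at p))
      \<and> Ck_plane k f1 \<and> Ck_plane k f2)"

definition smooth_plane :: "(real \<times> real \<Rightarrow> real) \<Rightarrow> bool" where
  "smooth_plane f \<longleftrightarrow> (\<forall>k. Ck_plane k f)"

text \<open>u(x,t) is C-infinity on the closed half plane [0,\<infinity>) \<times> \<real>: it is the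
  restriction of a C-infinity function on the whole plane.\<close>
definition smooth_halfplane :: "(real \<Rightarrow> real \<Rightarrow> real) \<Rightarrow> bool" where
  "smooth_halfplane u \<longleftrightarrow>
     (\<exists>U. smooth_plane U \<and> (\<forall>x t. 0 \<le> x \<longrightarrow> U (x, t) = u x t))"

definition admissible :: "(real \<Rightarrow> real) \<Rightarrow> real \<Rightarrow> bool" where
  "admissible A Ainf \<longleftrightarrow> smooth_real A \<and> (\<forall>x. A x > 0) \<and> Ainf > 0 \<and>
     (\<exists>xm xp. 0 < xm \<and> xm < xp \<and> (\<forall>x. x < xm \<longrightarrow> A x = 1) \<and>
                                   (\<forall>x. x > xp \<longrightarrow> A x = Ainf))"

definition boxA :: "(real \<Rightarrow> real) \<Rightarrow> (real \<Rightarrow> real \<Rightarrow> real) \<Rightarrow> real \<Rightarrow> real \<Rightarrow> real" where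
  "boxA A u x t = deriv (\<lambda>s. deriv (\<lambda>r. u x r) s) t
      - (1 / A x) * deriv (\<lambda>y. A y * deriv (\<lambda>z. u z t) y) x"

end

theory Submission
  imports Defs
begin


lemma Ck_cont: "Ck_plane k f \<Longrightarrow> continuous_on UNIV f"
proof (induction k arbitrary: f)
  case 0 then show ?case by simp
next
  case (Suc k)
  then obtain f1 f2 where d: "\<forall>p. (f has_derivative (\<lambda>h. f1 p * fst h + f2 p * snd h)) (at p)" by auto
  show ?case
    by (metis continuous_at_imp_continuous_on d has_derivative_continuous)
qed

lemma partial1:
  assumes "\<forall>p. (f has_derivative (\<lambda>h. f1 p * fst h + f2 p * snd h)) (at p)"
  shows "((\<lambda>x. f (x,t)) has_real_derivative f1 (x,t)) (at x)"
proof -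
  have i: "((\<lambda>x. (x,t)) has_derivative (\<lambda>h. (h,0))) (at x)"
    by (auto intro!: derivative_eq_intros)
  have "((\<lambda>x. f (x,t)) has_derivative (\<lambda>h. f1 (x,t) * fst (h,0::real) + f2 (x,t) * snd (h,0::real))) (at x)"
    using has_derivative_compose[OF i, of f] assms by blast
  then show ?thesis by (simp add: has_field_derivative_def mult_commute_abs)
qed

lemma partial2:
  assumes "\<forall>p. (f has_derivative (\<lambda>h. f1 p * fst h + f2 p * snd h)) (at p)"
  shows "((\<lambda>t. f (x,t)) has_real_derivative f2 (x,t)) (at t)"
proof -
  have i: "((\<lambda>t. (x,t)) has_derivative (\<lambda>h. (0,h))) (at t)"
    by (auto intro!: derivative_eq_intros)
  have "((\<lambda>t. f (x,t)) has_derivative (\<lambda>h. f1 (x,t) * fst (0::real,h) + f2 (x,t) * snd (0::real,h))) (at t)"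
    using has_derivative_compose[OF i, of f] assms by blast
  then show ?thesis by (simp add: has_field_derivative_def mult_commute_abs)
qed

lemma ftc_int:
  fixes f :: "real \<Rightarrow> real"
  assumes "a \<le> b" "continuous_on {a..b} f" "\<And>x. a<x \<Longrightarrow> x<b \<Longrightarrow> (f has_real_derivative f' x) (at x)"
  shows "(f' has_integral (f b - f a)) {a..b}"
  using fundamental_theorem_of_calculus_interior[OF assms(1,2)] assms(3)
  by (simp add: has_real_derivative_iff_has_vector_derivative)

lemma cont_slice1: "continuous_on UNIV F \<Longrightarrow> continuous_on S (\<lambda>x. F (x,t))"
  by (rule continuous_on_compose2[of UNIV F S "\<lambda>x. (x,t)"]) (auto intro!: continuous_intros)
lemma cont_slice2: "continuous_on UNIV F \<Longrightarrow> continuous_on S (\<lambda>t. F (x,t))"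
  by (rule continuous_on_compose2[of UNIV F S "\<lambda>t. (x,t)"]) (auto intro!: continuous_intros)



locale wsetup =
  fixes A A' :: "real \<Rightarrow> real" and Ainf l xm :: real and \<phi> :: "real\<Rightarrow>real" and a b :: real
   and U U1 U2 U11 U12 U21 U22 :: "real \<times> real \<Rightarrow> real"
  assumes dA: "\<And>x. (A has_real_derivative A' x) (at x)"
  and cA': "continuous_on UNIV A'"
  and Apos: "\<And>x. A x > 0" and Ainf_pos: "Ainf > 0"
  and xm: "0 < xm" "\<And>x. x < xm \<Longrightarrow> A x = 1"
  and l_pos: "l > 0" and A_l: "\<And>x. x > l \<Longrightarrow> A x = Ainf"
  and cphi: "continuous_on UNIV \<phi>"
  and ab: "0 < a" "a \<le> b" "\<And>t. t \<notin> {a..b} \<Longrightarrow> \<phi> t = 0"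
  and dU: "\<forall>p. (U has_derivative (\<lambda>h. U1 p * fst h + U2 p * snd h)) (at p)"
  and dU1: "\<forall>p. (U1 has_derivative (\<lambda>h. U11 p * fst h + U12 p * snd h)) (at p)"
  and dU2: "\<forall>p. (U2 has_derivative (\<lambda>h. U21 p * fst h + U22 p * snd h)) (at p)"
  and c11: "continuous_on UNIV U11" and c12: "continuous_on UNIV U12"
  and c21: "continuous_on UNIV U21" and c22: "continuous_on UNIV U22"
  and pde: "\<And>x t. x > 0 \<Longrightarrow> U22 (x,t) = U11 (x,t) + A' x / A x * U1 (x,t)"
  and neu: "\<And>t. U1 (0,t) = \<phi> t"
  and past: "\<And>x t. x > 0 \<Longrightarrow> t < 0 \<Longrightarrow> U (x,t) = 0"
begin

end



lemma zero_on_closure: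
  fixes F :: "'a::topological_space \<Rightarrow> real"
  assumes "continuous_on UNIV F" "\<And>z. z \<in> S \<Longrightarrow> F z = 0" "z \<in> closure S"
  shows "F z = 0"
proof -
  have "closed {z \<in> UNIV. F z = 0}"
    by (rule continuous_closed_preimage_constant[OF assms(1)]) simp
  moreover have "S \<subseteq> {z \<in> UNIV. F z = 0}" using assms(2) by auto
  ultimately have "closure S \<subseteq> {z \<in> UNIV. F z = 0}" by (rule closure_minimal[rotated])
  then show ?thesis using assms(3) by auto
qed

lemma swap_cont: "continuous_on UNIV (F::real\<times>real\<Rightarrow>real) \<Longrightarrow> continuous_on UNIV (\<lambda>(x, t). F (t, x))"
proof -
  assume c: "continuous_on UNIV F"
  have "continuous_on UNIV (\<lambda>z. F (snd z, fst z))"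
    by (rule continuous_on_compose2[OF c]) (auto intro!: continuous_intros)
  then show ?thesis by (simp add: split_beta)
qed

lemma deriv_locally_zero:
  fixes f :: "real \<Rightarrow> real"
  assumes "(f has_real_derivative D) (at x)" "open S" "x \<in> S" "\<And>y. y \<in> S \<Longrightarrow> f y = 0"
  shows "D = 0"
proof -
  have "((\<lambda>y. 0) has_real_derivative D) (at x)"
    by (rule has_field_derivative_transform_within_open[OF assms(1,2,3)]) (use assms(4) in auto)
  then show ?thesis using DERIV_const DERIV_unique by blast
qed

context wsetup begin

lemma dUx: "((\<lambda>x. U (x,t)) has_real_derivative U1 (x,t)) (at x)" using partial1[OF dU] .
lemma dUt: "((\<lambda>t. U (x,t)) has_real_derivative U2 (x,t)) (at t)" using partial2[OF dU] .
lemma dU1x: "((\<lambda>x. U1 (x,t)) has_real_derivative U11 (x,t)) (at x)" using partial1[OF dU1] .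
lemma dU1t: "((\<lambda>t. U1 (x,t)) has_real_derivative U12 (x,t)) (at t)" using partial2[OF dU1] .
lemma dU2x: "((\<lambda>x. U2 (x,t)) has_real_derivative U21 (x,t)) (at x)" using partial1[OF dU2] .
lemma dU2t: "((\<lambda>t. U2 (x,t)) has_real_derivative U22 (x,t)) (at t)" using partial2[OF dU2] .

lemma cU: "continuous_on UNIV U"
  by (metis continuous_at_imp_continuous_on dU has_derivative_continuous)
lemma cU1: "continuous_on UNIV U1"
  by (metis continuous_at_imp_continuous_on dU1 has_derivative_continuous)
lemma cU2: "continuous_on UNIV U2"
  by (metis continuous_at_imp_continuous_on dU2 has_derivative_continuous)
lemma cA: "continuous_on UNIV A"
  by (meson DERIV_isCont continuous_at_imp_continuous_on dA)

lemma mixed_int: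
  assumes "x0 \<le> z"
  shows "U2 (z,t) - U2 (x0,t) = integral {x0..z} (\<lambda>y. U12 (y,t))"
proof -
  have eq: "U (z,s) - U (x0,s) = integral {x0..z} (\<lambda>y. U1 (y,s))" for s
  proof -
    have "((\<lambda>y. U1 (y,s)) has_integral (U (z,s) - U (x0,s))) {x0..z}"
      by (rule ftc_int[OF assms]) (auto intro: cont_slice1[OF cU] dUx)
    then show ?thesis by (simp add: integral_unique)
  qed
  have d1: "((\<lambda>s. U (z,s) - U (x0,s)) has_real_derivative (U2 (z,t) - U2 (x0,t))) (at t)"
    by (intro derivative_intros dUt)
  have d2: "((\<lambda>s. integral (cbox x0 z) (\<lambda>y. U1 (y,s))) has_real_derivative
      integral (cbox x0 z) (\<lambda>y. U12 (y,t))) (at t within UNIV)"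
  proof (rule leibniz_rule_field_derivative[where f="\<lambda>s y. U1 (y,s)" and fx="\<lambda>s y. U12 (y,s)"])
    show "\<And>x t. x \<in> UNIV \<Longrightarrow> t \<in> cbox x0 z \<Longrightarrow> ((\<lambda>s. U1 (t, s)) has_real_derivative U12 (t, x)) (at x within UNIV)"
      using dU1t by blast
    show "\<And>x. x \<in> UNIV \<Longrightarrow> (\<lambda>y. U1 (y, x)) integrable_on cbox x0 z"
      by (auto intro!: integrable_continuous_interval cont_slice1[OF cU1])
    show "continuous_on (UNIV \<times> cbox x0 z) (\<lambda>(x, t). U12 (t, x))"
      by (rule continuous_on_subset[OF swap_cont[OF c12]]) simp
  qed auto
  have "U2 (z,t) - U2 (x0,t) = integral (cbox x0 z) (\<lambda>y. U12 (y,t))"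
  proof -
    have "(\<lambda>s. U (z,s) - U (x0,s)) = (\<lambda>s. integral (cbox x0 z) (\<lambda>y. U1 (y,s)))"
      using eq by (simp add: cbox_interval)
    with d1 have d1': "((\<lambda>s. integral (cbox x0 z) (\<lambda>y. U1 (y,s))) has_real_derivative (U2 (z,t) - U2 (x0,t))) (at t)"
      by simp
    show ?thesis using DERIV_unique[OF d1'] d2 by simp
  qed
  then show ?thesis by simp
qed

lemma clairaut: "U21 p = U12 p"
proof -
  obtain x t where p: "p = (x,t)" by fastforce
  have e: "U2 (z,t) = U2 (x-1,t) + integral {x-1..z} (\<lambda>y. U12 (y,t))" if "z \<in> {x-1..x+1}" for z
    using mixed_int[of "x-1" z t] that by simp
  have "((\<lambda>z. U2 (x-1,t) + integral {x-1..z} (\<lambda>y. U12 (y,t))) has_real_derivative U12 (x,t)) (at x within {x-1..x+1})"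
  proof -
    have c: "continuous_on {x-1..x+1} (\<lambda>y. U12 (y,t))" by (rule cont_slice1[OF c12])
    have "((\<lambda>z. integral {x-1..z} (\<lambda>y. U12 (y,t))) has_real_derivative U12 (x,t)) (at x within {x-1..x+1})"
      using integral_has_real_derivative[OF c] by auto
    from DERIV_add[OF DERIV_const this] show ?thesis by simp
  qed
  then have D1: "((\<lambda>z. U2 (x-1,t) + integral {x-1..z} (\<lambda>y. U12 (y,t))) has_real_derivative U12 (x,t)) (at x)"
    by (simp add: at_within_Icc_at)
  have D2: "((\<lambda>z. U2 (x-1,t) + integral {x-1..z} (\<lambda>y. U12 (y,t))) has_real_derivative U21 (x,t)) (at x)"
    by (rule has_field_derivative_transform_within_open[OF dU2x, where S="{x-1<..<x+1}"]) (auto intro!: e)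
  have "U21 (x,t) = U12 (x,t)" by (rule DERIV_unique[OF D2 D1])
  then show ?thesis using p by simp
qed

end


context wsetup begin

lemma quadrant_closure: "(x::real) \<ge> 0 \<Longrightarrow> t \<le> 0 \<Longrightarrow> (x,t) \<in> closure ({0<..} \<times> {..<(0::real)})"
  using closure_greaterThan[of "0::real"] closure_lessThan[of "0::real"] by (simp add: closure_Times)

lemma U_past0: "x \<ge> 0 \<Longrightarrow> t \<le> 0 \<Longrightarrow> U (x,t) = 0"
  by (rule zero_on_closure[OF cU _ quadrant_closure]) (auto intro: past)

lemma U1_past0: "x \<ge> 0 \<Longrightarrow> t \<le> 0 \<Longrightarrow> U1 (x,t) = 0"
proof (rule zero_on_closure[OF cU1 _ quadrant_closure])
  fix z :: "real \<times> real" assume "z \<in> {0<..} \<times> {..<0}"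
  then obtain x t where z: "z = (x,t)" "x > 0" "t < 0" by auto
  have "U1 (x,t) = 0"
    by (rule deriv_locally_zero[OF dUx, where S="{0<..}"]) (use z past in auto)
  then show "U1 z = 0" using z by simp
qed

lemma U2_past0: "x \<ge> 0 \<Longrightarrow> t \<le> 0 \<Longrightarrow> U2 (x,t) = 0"
proof (rule zero_on_closure[OF cU2 _ quadrant_closure])
  fix z :: "real \<times> real" assume "z \<in> {0<..} \<times> {..<0}"
  then obtain x t where z: "z = (x,t)" "x > 0" "t < 0" by auto
  have "U2 (x,t) = 0"
    by (rule deriv_locally_zero[OF dUt, where S="{..<0}"]) (use z past in auto)
  then show "U2 z = 0" using z by simp
qed

lemma pde0: "x \<ge> 0 \<Longrightarrow> A x * U22 (x,t) = A x * U11 (x,t) + A' x * U1 (x,t)"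
proof -
  let ?F = "\<lambda>z. A (fst z) * U22 z - A (fst z) * U11 z - A' (fst z) * U1 z"
  have c: "continuous_on UNIV ?F"
    by (intro continuous_intros continuous_on_compose2[OF cA] continuous_on_compose2[OF cA']
         c22 c11 cU1) auto
  assume x: "x \<ge> 0"
  have "?F (x,t) = 0"
  proof (rule zero_on_closure[OF c, where S="{0<..} \<times> UNIV"])
    fix z :: "real \<times> real" assume "z \<in> {0<..} \<times> UNIV"
    then obtain y s where z: "z = (y,s)" "y > 0" by auto
    show "?F z = 0" using pde[OF z(2), of s] Apos[of y] z by (simp add: field_simps)
  next
    show "(x,t) \<in> closure ({0<..} \<times> UNIV)" using x closure_greaterThan[of "0::real"] by (simp add: closure_Times)
  qed
  then show ?thesis by simp
qed

lemma A0: "A 0 = 1" using xm by auto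

lemma A'_l: "x > l \<Longrightarrow> A' x = 0"
proof -
  assume x: "x > l"
  have "((\<lambda>y. A y - Ainf) has_real_derivative A' x) (at x)"
    using DERIV_diff[OF dA DERIV_const] by simp
  then show ?thesis
    by (rule deriv_locally_zero[where S="{l<..}"]) (use x A_l in auto)
qed

lemma outgoing: "x > l \<Longrightarrow> U1 (x,t) + U2 (x,t) = 0"
proof -
  assume x: "x > l"
  define S where "S = \<bar>t\<bar> + 1"
  define h where "h s = U1 (x+s, t-s) + U2 (x+s, t-s)" for s
  have path: "((\<lambda>s. (x+s, t-s)) has_derivative (\<lambda>e. (e, -e))) (at s)" for s
    by (auto intro!: derivative_eq_intros)
  have dh: "(h has_real_derivative (U11 (x+s,t-s) - U12 (x+s,t-s) + U21 (x+s,t-s) - U22 (x+s,t-s))) (at s)" for s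
  proof -
    have d1: "((\<lambda>s. U1 (x+s, t-s)) has_derivative (\<lambda>e. U11 (x+s,t-s) * e + U12 (x+s,t-s) * (-e))) (at s)"
      using has_derivative_compose[OF path spec[OF dU1, of "(x+s,t-s)"]] by simp
    have d2: "((\<lambda>s. U2 (x+s, t-s)) has_derivative (\<lambda>e. U21 (x+s,t-s) * e + U22 (x+s,t-s) * (-e))) (at s)"
      using has_derivative_compose[OF path spec[OF dU2, of "(x+s,t-s)"]] by simp
    have "(h has_derivative (\<lambda>e. (U11 (x+s,t-s) * e + U12 (x+s,t-s) * (-e)) + (U21 (x+s,t-s) * e + U22 (x+s,t-s) * (-e)))) (at s)"
      unfolding h_def by (rule has_derivative_add[OF d1 d2])
    then show ?thesis unfolding has_field_derivative_def
      by (rule has_derivative_eq_rhs) (auto simp: algebra_simps)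
  qed
  have dh0: "(h has_real_derivative 0) (at s)" if "0 < s" for s
  proof -
    have y: "x + s > l" "x + s \<ge> 0" using x that l_pos by auto
    have "U11 (x+s,t-s) - U12 (x+s,t-s) + U21 (x+s,t-s) - U22 (x+s,t-s) = 0"
      using pde0[OF y(2), of "t-s"] A'_l[OF y(1)] Apos[of "x+s"] clairaut[of "(x+s,t-s)"] by simp
    then show ?thesis using dh[of s] by simp
  qed
  have "h S = h 0"
  proof (rule DERIV_isconst_end[of 0 S h])
    show "0 < S" unfolding S_def by simp
    show "continuous_on {0..S} h"
      by (meson DERIV_isCont continuous_at_imp_continuous_on dh)
  qed (use dh0 in auto)
  moreover have "h S = 0" unfolding h_def S_def using U1_past0 U2_past0 x l_pos by auto
  ultimately show ?thesis unfolding h_def by simp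
qed

end


context wsetup begin

definition "L = l + 1"

lemma L_pos: "L > 0" and L_gt: "L > l" unfolding L_def using l_pos by auto

lemma int_cont: "continuous_on UNIV (F::real\<times>real\<Rightarrow>real) \<Longrightarrow> (\<lambda>x. F (x,t)) integrable_on {0..L}"
  by (rule integrable_continuous_interval, erule cont_slice1)

lemma cAx: "continuous_on S A" using cA continuous_on_subset by blast

lemma conservation:
  "Ainf * U (L,t) + integral {0..L} (\<lambda>x. A x * U2 (x,t)) + (LBINT s=0..t. \<phi> s) = 0"
proof -
  define G where "G t = Ainf * U (L,t) + integral {0..L} (\<lambda>x. A x * U2 (x,t)) + (LBINT s=0..t. \<phi> s)" for t
  have dG: "(G has_real_derivative 0) (at t)" for t
  proof -
    have d1: "((\<lambda>t. Ainf * U (L,t)) has_real_derivative Ainf * U2 (L,t)) (at t)"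
      using DERIV_cmult[OF dUt, of Ainf] by simp
    have d2: "((\<lambda>s. integral (cbox 0 L) (\<lambda>x. A x * U2 (x,s))) has_real_derivative
      integral (cbox 0 L) (\<lambda>x. A x * U22 (x,t))) (at t within UNIV)"
    proof (rule leibniz_rule_field_derivative[where f="\<lambda>s x. A x * U2 (x,s)" and fx="\<lambda>s x. A x * U22 (x,s)"])
      show "\<And>s x. s \<in> UNIV \<Longrightarrow> x \<in> cbox 0 L \<Longrightarrow> ((\<lambda>s. A x * U2 (x, s)) has_real_derivative A x * U22 (x, s)) (at s within UNIV)"
        using DERIV_cmult[OF dU2t] by auto
      show "\<And>s. s \<in> UNIV \<Longrightarrow> (\<lambda>x. A x * U2 (x, s)) integrable_on cbox 0 L"
        by (auto intro!: integrable_continuous_interval continuous_intros cAx cont_slice1[OF cU2])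
      have "continuous_on UNIV (\<lambda>z. A (snd z) * U22 (snd z, fst z))"
        by (intro continuous_intros continuous_on_compose2[OF cA] continuous_on_compose2[OF c22]) auto
      then show "continuous_on (UNIV \<times> cbox 0 L) (\<lambda>(s, x). A x * U22 (x, s))"
        unfolding split_beta by (rule continuous_on_subset) auto
    qed auto
    have d3: "((\<lambda>t. LBINT s=0..t. \<phi> s) has_real_derivative \<phi> t) (at t)"
    proof -
      have "((\<lambda>u. LBINT s=0..u. \<phi> s) has_vector_derivative \<phi> t) (at t within {-(\<bar>t\<bar>+1)..\<bar>t\<bar>+1})"
        using interval_integral_FTC2[where a="-(\<bar>t\<bar>+1)" and b="\<bar>t\<bar>+1" and c=0 and f=\<phi> and x=t]
          continuous_on_subset[OF cphi] by (auto simp: zero_ereal_def)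
      moreover have "at t within {-(\<bar>t\<bar>+1)..\<bar>t\<bar>+1} = at t"
        by (rule at_within_Icc_at) auto
      ultimately show ?thesis by (simp add: has_real_derivative_iff_has_vector_derivative)
    qed
    have ftc: "integral {0..L} (\<lambda>x. A x * U22 (x,t)) = A L * U1 (L,t) - A 0 * U1 (0,t)"
    proof -
      have "((\<lambda>x. A x * U22 (x,t)) has_integral (A L * U1 (L,t) - A 0 * U1 (0,t))) {0..L}"
      proof (rule ftc_int[where f="\<lambda>x. A x * U1 (x,t)"])
        show "0 \<le> L" using L_pos by simp
        show "continuous_on {0..L} (\<lambda>x. A x * U1 (x, t))"
          by (intro continuous_intros cAx cont_slice1[OF cU1])
        fix x assume x: "0 < x" "x < L"
        have "((\<lambda>x. A x * U1 (x, t)) has_real_derivative (A x * U11 (x,t) + A' x * U1 (x,t))) (at x)"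
          using DERIV_mult[OF dA[of x] dU1x[of t x]] by (simp add: algebra_simps)
        then show "((\<lambda>x. A x * U1 (x, t)) has_real_derivative A x * U22 (x, t)) (at x)"
          using pde0[of x t] x by simp
      qed
      then show ?thesis by (simp add: integral_unique)
    qed
    have "(G has_real_derivative (Ainf * U2 (L,t) + integral (cbox 0 L) (\<lambda>x. A x * U22 (x,t)) + \<phi> t)) (at t)"
      unfolding G_def using DERIV_add[OF DERIV_add[OF d1 d2[unfolded cbox_interval]] d3] by simp
    moreover have "Ainf * U2 (L,t) + integral (cbox 0 L) (\<lambda>x. A x * U22 (x,t)) + \<phi> t = 0"
    proof -
      have "A L = Ainf" using A_l L_gt by simp
      moreover have "U2 (L,t) = - U1 (L,t)" using outgoing[OF L_gt, of t] by simp
      ultimately show ?thesis using ftc A0 neu[of t] by (simp add: algebra_simps)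
    qed
    ultimately show ?thesis by simp
  qed
  have "G 0 = 0"
  proof -
    have "integral {0..L} (\<lambda>x. A x * U2 (x,0)) = integral {0..L} (\<lambda>x. 0)"
      by (rule integral_cong) (simp add: U2_past0)
    then show ?thesis unfolding G_def using U_past0[of L 0] L_pos by (simp add: zero_ereal_def)
  qed
  then show ?thesis using DERIV_isconst_all[of G t 0] dG unfolding G_def by simp
qed

lemma identity_alg:
  fixes Ai J I1 I2 UL U0 LB :: real
  assumes "Ai > 0" "J = I1 + (1/Ai)*I2" "I1 = UL - U0" "Ai*UL + I2 + LB = 0"
  shows "U0 - (-(1/Ai)*LB) = -J"
proof -
  have "LB = - Ai*UL - I2" using assms(4) by linarith
  then show ?thesis using assms(1,2,3) by (simp add: field_simps)
qed

lemma identity: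
  "U (0,t) - (- (1 / Ainf) * (LBINT s=0..t. \<phi> s)) =
     - integral {0..L} (\<lambda>x. U1 (x,t) + (1 / Ainf) * (A x * U2 (x,t)))"
proof -
  have i1: "(\<lambda>x. U1 (x,t)) integrable_on {0..L}" by (rule int_cont[OF cU1])
  have i2: "(\<lambda>x. A x * U2 (x,t)) integrable_on {0..L}"
    by (auto intro!: integrable_continuous_interval continuous_intros cAx cont_slice1[OF cU2])
  have "integral {0..L} (\<lambda>x. U1 (x,t) + (1 / Ainf) * (A x * U2 (x,t))) =
      integral {0..L} (\<lambda>x. U1 (x,t)) + (1/Ainf) * integral {0..L} (\<lambda>x. A x * U2 (x,t))"
  proof -
    have i3: "(\<lambda>x. (1 / Ainf) * (A x * U2 (x,t))) integrable_on {0..L}"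
      using integrable_on_cmult_left[OF i2, of "1/Ainf"] by simp
    have "integral {0..L} (\<lambda>x. U1 (x,t) + (1 / Ainf) * (A x * U2 (x,t))) =
      integral {0..L} (\<lambda>x. U1 (x,t)) + integral {0..L} (\<lambda>x. (1 / Ainf) * (A x * U2 (x,t)))"
      by (rule integral_add[OF i1 i3])
    also have "integral {0..L} (\<lambda>x. (1 / Ainf) * (A x * U2 (x,t))) = (1/Ainf) * integral {0..L} (\<lambda>x. A x * U2 (x,t))"
      by (rule integral_mult[OF i2, symmetric])
    finally show ?thesis .
  qed
  moreover have "integral {0..L} (\<lambda>x. U1 (x,t)) = U (L,t) - U (0,t)"
  proof -
    have "((\<lambda>x. U1 (x,t)) has_integral (U (L,t) - U (0,t))) {0..L}"
    proof (rule ftc_int)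
      show "0 \<le> L" using L_pos by simp
      show "continuous_on {0..L} (\<lambda>x. U (x, t))" by (rule cont_slice1[OF cU])
    qed (rule dUx)
    then show ?thesis by (simp add: integral_unique)
  qed
  ultimately show ?thesis by (intro identity_alg[OF Ainf_pos _ _ conservation[of t]])
qed

end


lemma cont_sw: "continuous_on UNIV (F::real\<times>real\<Rightarrow>real) \<Longrightarrow> continuous_on S (\<lambda>z. F (snd z, fst z))"
  by (rule continuous_on_compose2[of UNIV F]) (auto intro!: continuous_intros)
lemma cont_snd: "continuous_on UNIV (f::real\<Rightarrow>real) \<Longrightarrow> continuous_on S (\<lambda>z::real\<times>real. f (snd z))"
  by (rule continuous_on_compose2[of UNIV f]) (auto intro!: continuous_intros)

context wsetup begin

definition "Vf h t = integral {0..L} (\<lambda>x. A x * ((1 + h x) * (U1 (x,t) + U2 (x,t))^2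
     + (1 - h x) * (U2 (x,t) - U1 (x,t))^2))"

lemma pointwise_ineq:
  fixes Ax A'x h nu kappa P Q :: real
  assumes "Ax > 0" "\<bar>A'x\<bar> \<le> nu * Ax / 2" "h > 0" "kappa * (1 + h) \<le> nu * h / 2" "kappa * (1 - h) \<le> nu * h / 2"
  shows "- 2 * h * A'x * P * Q - Ax * nu * h * (P^2 + Q^2) \<le> - kappa * (Ax * ((1 + h) * P^2 + (1 - h) * Q^2))"
proof -
  have pq: "\<bar>2 * P * Q\<bar> \<le> P^2 + Q^2"
    using sum_squares_bound[of P Q] sum_squares_bound[of P "-Q"] by (auto simp: abs_if power2_eq_square)
  have "\<bar>2 * h * A'x * P * Q\<bar> = h * \<bar>A'x\<bar> * \<bar>2 * P * Q\<bar>" using assms(3) by (simp add: abs_mult)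
  also have "\<dots> \<le> h * (nu * Ax / 2) * (P^2 + Q^2)"
    by (intro mult_mono mult_left_mono assms pq) (use assms in auto)
  finally have t1: "- 2 * h * A'x * P * Q \<le> h * (nu * Ax / 2) * (P^2 + Q^2)" by linarith
  have t2: "kappa * (Ax * ((1 + h) * P^2 + (1 - h) * Q^2)) \<le> Ax * (nu * h / 2) * (P^2 + Q^2)"
  proof -
    have "kappa * (Ax * ((1 + h) * P^2 + (1 - h) * Q^2)) = Ax * ((kappa * (1 + h)) * P^2 + (kappa * (1 - h)) * Q^2)"
      by (simp add: algebra_simps)
    also have "\<dots> \<le> Ax * ((nu * h / 2) * P^2 + (nu * h / 2) * Q^2)"
      by (intro mult_left_mono add_mono mult_right_mono assms) (use assms in auto)
    finally show ?thesis by (simp add: algebra_simps)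
  qed
  show ?thesis using t1 t2 by (simp add: algebra_simps)
qed

lemma lyap:
  fixes nu delta kappa Amin D :: real
  assumes Amin: "Amin > 0" and bnd: "\<And>x. x \<in> {0..L} \<Longrightarrow> Amin \<le> A x \<and> \<bar>A' x\<bar> \<le> D"
   and nu: "D \<le> nu * Amin / 2" and nupos: "nu > 0"
   and delta: "delta > 0" "delta * exp (nu * L) \<le> 1/2"
   and kappa: "kappa \<le> nu * delta / 4"
  shows "\<exists>V'. (Vf (\<lambda>x. delta * exp (nu * x)) has_real_derivative V') (at t) \<and>
            (\<phi> t = 0 \<longrightarrow> V' \<le> - kappa * Vf (\<lambda>x. delta * exp (nu * x)) t)"
proof -
  define h where "h x = delta * exp (nu * x)" for x
  have hpos: "h x \<ge> delta" if "x \<in> {0..L}" for x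
    using that delta nupos unfolding h_def by auto
  have hle: "h x \<le> 1/2" if "x \<in> {0..L}" for x
  proof -
    have "exp (nu * x) \<le> exp (nu * L)" using that nupos by (auto intro: mult_left_mono)
    then have "delta * exp (nu * x) \<le> delta * exp (nu * L)" using delta by auto
    then show ?thesis unfolding h_def using delta by linarith
  qed
  define I where "I s x = A x * ((1 + h x) * (U1 (x,s) + U2 (x,s))^2 + (1 - h x) * (U2 (x,s) - U1 (x,s))^2)" for s x
  define It where "It s x = A x * ((1 + h x) * (2 * (U1 (x,s) + U2 (x,s)) * (U12 (x,s) + U22 (x,s)))
      + (1 - h x) * (2 * (U2 (x,s) - U1 (x,s)) * (U22 (x,s) - U12 (x,s))))" for s x
  define Fl where "Fl x = A x * ((1 + h x) * (U1 (x,t) + U2 (x,t))^2 - (1 - h x) * (U2 (x,t) - U1 (x,t))^2)" for x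
  define Fx where "Fx x = A' x * ((1 + h x) * (U1 (x,t) + U2 (x,t))^2 - (1 - h x) * (U2 (x,t) - U1 (x,t))^2)
     + A x * (nu * h x * (U1 (x,t) + U2 (x,t))^2 + (1 + h x) * (2 * (U1 (x,t) + U2 (x,t)) * (U11 (x,t) + U21 (x,t)))
     + nu * h x * (U2 (x,t) - U1 (x,t))^2 - (1 - h x) * (2 * (U2 (x,t) - U1 (x,t)) * (U21 (x,t) - U11 (x,t))))" for x
  have Vdef: "Vf (\<lambda>x. delta * exp (nu * x)) = (\<lambda>s. integral (cbox 0 L) (I s))"
    unfolding Vf_def I_def h_def by (simp add: cbox_interval)
  have dh: "(h has_real_derivative nu * h x) (at x)" for x
    unfolding h_def by (auto intro!: derivative_eq_intros)
  have dI: "((\<lambda>s. I s x) has_real_derivative It s x) (at s)" for s x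
    unfolding I_def It_def
    by (auto intro!: derivative_eq_intros dU1t dU2t simp: algebra_simps power2_eq_square)
  have dV: "(Vf (\<lambda>x. delta * exp (nu * x)) has_real_derivative integral (cbox 0 L) (It t)) (at t within UNIV)"
    unfolding Vdef
  proof (rule leibniz_rule_field_derivative[where f=I and fx=It])
    show "\<And>s x. s \<in> UNIV \<Longrightarrow> x \<in> cbox 0 L \<Longrightarrow> ((\<lambda>s. I s x) has_real_derivative It s x) (at s within UNIV)"
      using dI by simp
    show "\<And>s. s \<in> UNIV \<Longrightarrow> I s integrable_on cbox 0 L"
      unfolding I_def h_def
      by (auto intro!: integrable_continuous_interval continuous_intros cAx cont_slice1[OF cU2] cont_slice1[OF cU1])
    show "continuous_on (UNIV \<times> cbox 0 L) (\<lambda>(s, x). It s x)"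
      unfolding It_def h_def split_beta
      by (intro continuous_intros cont_sw cont_snd cA cU1 cU2 c12 c22)
  qed auto
  have cIt: "continuous_on {0..L} (It t)"
    unfolding It_def h_def
    by (intro continuous_intros cAx cont_slice1 cU1 cU2 c12 c22)
  have dFl: "(Fl has_real_derivative Fx x) (at x)" for x
    unfolding Fl_def Fx_def
    by (auto intro!: derivative_eq_intros dU1x dU2x dA dh simp: algebra_simps power2_eq_square)
  have ftc: "(Fx has_integral (Fl L - Fl 0)) {0..L}"
  proof (rule ftc_int)
    show "0 \<le> L" using L_pos by simp
    show "continuous_on {0..L} Fl"
      by (meson DERIV_isCont continuous_at_imp_continuous_on dFl)
  qed (rule dFl)
  have iIt: "(It t has_integral integral {0..L} (It t)) {0..L}"
    using integrable_continuous_interval[OF cIt] by (simp add: integrable_integral)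
  have iI: "(I t has_integral Vf (\<lambda>x. delta * exp (nu * x)) t) {0..L}"
  proof -
    have "continuous_on {0..L} (I t)" unfolding I_def h_def
      by (intro continuous_intros cAx cont_slice1 cU1 cU2)
    then have "I t integrable_on {0..L}" by (rule integrable_continuous_interval)
    then show ?thesis unfolding Vdef by (simp add: cbox_interval integrable_integral)
  qed
  have pw: "It t x - Fx x \<le> - kappa * I t x" if x: "x \<in> {0..L}" for x
  proof -
    let ?P = "U1 (x,t) + U2 (x,t)" and ?Q = "U2 (x,t) - U1 (x,t)"
    have e1: "A x * U22 (x,t) = A x * U11 (x,t) + A' x * U1 (x,t)" using pde0[of x t] x by simp
    have e2: "U21 (x,t) = U12 (x,t)" using clairaut by simp
    have "It t x - Fx x = - 2 * h x * A' x * ?P * ?Q - A x * nu * h x * (?P^2 + ?Q^2)"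
      unfolding It_def Fx_def e2 using e1 by algebra
    also have "\<dots> \<le> - kappa * (A x * ((1 + h x) * ?P^2 + (1 - h x) * ?Q^2))"
    proof (rule pointwise_ineq)
      show "0 < A x" by (rule Apos)
      have "\<bar>A' x\<bar> \<le> D" "Amin \<le> A x" using bnd x by auto
      moreover have "nu * Amin / 2 \<le> nu * A x / 2" using calculation(2) nupos by simp
      ultimately show "\<bar>A' x\<bar> \<le> nu * A x / 2" using nu by linarith
      show "0 < h x" using hpos[OF x] delta by linarith
      have "kappa * (1 + h x) \<le> nu * h x / 2" "kappa * (1 - h x) \<le> nu * h x / 2"
      proof -
        have k0: "kappa * 2 \<le> nu * h x / 2"
        proof -
          have "nu * delta \<le> nu * h x" using hpos[OF x] nupos by (intro mult_left_mono) auto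
          then show ?thesis using kappa by linarith
        qed
        show "kappa * (1 + h x) \<le> nu * h x / 2" "kappa * (1 - h x) \<le> nu * h x / 2"
        proof -
          show "kappa * (1 + h x) \<le> nu * h x / 2"
          proof (cases "kappa \<ge> 0")
            case True
            then have "kappa * (1 + h x) \<le> kappa * 2" using hle[OF x] by (intro mult_left_mono) auto
            then show ?thesis using k0 by linarith
          next
            case False
            then have "kappa * (1 + h x) \<le> 0" using hpos[OF x] delta by (simp add: mult_nonpos_nonneg)
            moreover have "0 \<le> nu * h x / 2" using hpos[OF x] delta nupos by simp
            ultimately show ?thesis by linarith
          qed
          show "kappa * (1 - h x) \<le> nu * h x / 2"
          proof (cases "kappa \<ge> 0")
            case True
            then have "kappa * (1 - h x) \<le> kappa * 2" using hpos[OF x] delta by (intro mult_left_mono) auto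
            then show ?thesis using k0 by linarith
          next
            case False
            then have "kappa * (1 - h x) \<le> 0" using hle[OF x] by (simp add: mult_nonpos_nonneg)
            moreover have "0 \<le> nu * h x / 2" using hpos[OF x] delta nupos by simp
            ultimately show ?thesis by linarith
          qed
        qed
      qed
      then show "kappa * (1 + h x) \<le> nu * h x / 2" "kappa * (1 - h x) \<le> nu * h x / 2" by auto
    qed
    finally show ?thesis unfolding I_def by simp
  qed
  have bd: "Fl L - Fl 0 \<le> 0" if phi0: "\<phi> t = 0"
  proof -
    have "U1 (L,t) + U2 (L,t) = 0" using outgoing[OF L_gt] by simp
    moreover have "1 - h L \<ge> 0" using hle[of L] L_pos by simp
    ultimately have "Fl L \<le> 0" unfolding Fl_def using Apos[of L] by (simp add: mult_nonneg_nonneg)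
    moreover have "Fl 0 \<ge> 0"
    proof -
      have "U1 (0,t) = 0" using neu phi0 by simp
      then have "Fl 0 = 2 * h 0 * U2 (0,t)^2" unfolding Fl_def A0 by (simp add: algebra_simps)
      moreover have "h 0 \<ge> 0" using hpos[of 0] L_pos delta by simp
      ultimately show ?thesis by simp
    qed
    ultimately show ?thesis by linarith
  qed
  have "(It t - Fx) = (\<lambda>x. It t x - Fx x)" by auto
  have idiff: "((\<lambda>x. It t x - Fx x) has_integral (integral {0..L} (It t) - (Fl L - Fl 0))) {0..L}"
    by (rule has_integral_diff[OF iIt ftc])
  have ik: "((\<lambda>x. - kappa * I t x) has_integral (- kappa * Vf (\<lambda>x. delta * exp (nu * x)) t)) {0..L}"
    using has_integral_mult_right[OF iI, of "-kappa"] by simp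
  have le: "integral {0..L} (It t) - (Fl L - Fl 0) \<le> - kappa * Vf (\<lambda>x. delta * exp (nu * x)) t"
    by (rule has_integral_le[OF idiff ik]) (use pw in auto)
  show ?thesis
  proof (intro exI conjI impI)
    show "(Vf (\<lambda>x. delta * exp (nu * x)) has_real_derivative integral {0..L} (It t)) (at t)"
      using dV by (simp add: cbox_interval)
    assume "\<phi> t = 0"
    then show "integral {0..L} (It t) \<le> - kappa * Vf (\<lambda>x. delta * exp (nu * x)) t"
      using le bd by linarith
  qed
qed

end


lemma abs_le_sq: fixes y lam :: real assumes "lam > 0" shows "\<bar>y\<bar> \<le> (lam * y^2 + 1/lam) / 2"
proof -
  have e: "(lam * y^2 + 1/lam) / 2 - \<bar>y\<bar> = (lam * \<bar>y\<bar> - 1)^2 / (2 * lam)"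
    using assms by (simp add: field_simps power2_eq_square abs_mult_self_eq)
  have "0 \<le> (lam * \<bar>y\<bar> - 1)^2 / (2 * lam)" using assms by simp
  then show ?thesis using e by linarith
qed

lemma pw_final:
  fixes Ax Amin Amax Ainf h lam u1 u2 :: real
  assumes "Amin > 0" "Amin \<le> Ax" "Ax \<le> Amax" "Ainf > 0" "0 \<le> h" "h \<le> 1/2" "lam > 0"
  shows "\<bar>u1 + (1/Ainf) * (Ax * u2)\<bar> \<le>
    (1 + Amax/Ainf) * (lam / Amin * (Ax * ((1 + h) * (u1 + u2)^2 + (1 - h) * (u2 - u1)^2)) + 1/lam)"
proof -
  let ?P = "u1 + u2" and ?Q = "u2 - u1"
  have Ax0: "Ax > 0" using assms by linarith
  have a1: "\<bar>u1 + (1/Ainf) * (Ax * u2)\<bar> \<le> \<bar>u1\<bar> + \<bar>(1/Ainf) * (Ax * u2)\<bar>" by (rule abs_triangle_ineq)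
  have a2: "\<bar>(1/Ainf) * (Ax * u2)\<bar> = (Ax/Ainf) * \<bar>u2\<bar>" using Ax0 assms(4) by (simp add: abs_mult)
  have a3: "(Ax/Ainf) * \<bar>u2\<bar> \<le> (Amax/Ainf) * \<bar>u2\<bar>"
    using assms by (intro mult_right_mono divide_right_mono) auto
  have "\<bar>u1 + (1/Ainf) * (Ax * u2)\<bar> \<le> \<bar>u1\<bar> + (Amax/Ainf) * \<bar>u2\<bar>" using a1 a2 a3 by linarith
  also have "\<bar>u1\<bar> + (Amax/Ainf) * \<bar>u2\<bar> \<le> (1 + Amax/Ainf) * (\<bar>u1\<bar> + \<bar>u2\<bar>)"
  proof -
    have "0 \<le> Amax/Ainf" using assms by simp
    then have "0 \<le> (Amax/Ainf) * \<bar>u1\<bar>" by (intro mult_nonneg_nonneg) auto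
    then show ?thesis by (simp add: distrib_left distrib_right)
  qed
  also have "\<dots> \<le> (1 + Amax/Ainf) * (\<bar>?P\<bar> + \<bar>?Q\<bar>)"
  proof (rule mult_left_mono)
    show "\<bar>u1\<bar> + \<bar>u2\<bar> \<le> \<bar>?P\<bar> + \<bar>?Q\<bar>" by arith
    show "0 \<le> 1 + Amax / Ainf" using assms by simp
  qed
  also have "\<dots> \<le> (1 + Amax/Ainf) * (lam / Amin * (Ax * ((1 + h) * ?P^2 + (1 - h) * ?Q^2)) + 1/lam)"
  proof (rule mult_left_mono)
    have "\<bar>?P\<bar> + \<bar>?Q\<bar> \<le> (lam * ?P^2 + 1/lam) / 2 + (lam * ?Q^2 + 1/lam) / 2"
      using abs_le_sq[OF assms(7)] by (intro add_mono)
    also have "\<dots> = lam * (?P^2 + ?Q^2) / 2 + 1/lam" by (simp add: field_simps)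
    also have "\<dots> \<le> lam / Amin * (Ax * ((1 + h) * ?P^2 + (1 - h) * ?Q^2)) + 1/lam"
    proof -
      have s1: "?P^2 / 2 \<le> (1 + h) * ?P^2"
      proof -
        have "1/2 * ?P^2 \<le> (1 + h) * ?P^2" using assms(5) by (intro mult_right_mono) auto
        then show ?thesis by simp
      qed
      have s2: "?Q^2 / 2 \<le> (1 - h) * ?Q^2"
      proof -
        have "1/2 * ?Q^2 \<le> (1 - h) * ?Q^2" using assms(6) by (intro mult_right_mono) auto
        then show ?thesis by simp
      qed
      have "(?P^2 + ?Q^2) / 2 \<le> (1 + h) * ?P^2 + (1 - h) * ?Q^2" using s1 s2 by simp
      moreover have "0 \<le> (?P^2 + ?Q^2) / 2" by simp
      ultimately have "Amin * ((?P^2 + ?Q^2) / 2) \<le> Ax * ((1 + h) * ?P^2 + (1 - h) * ?Q^2)"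
        using assms by (intro mult_mono) auto
      then have "lam / Amin * (Amin * ((?P^2 + ?Q^2) / 2)) \<le> lam / Amin * (Ax * ((1 + h) * ?P^2 + (1 - h) * ?Q^2))"
        using assms by (intro mult_left_mono) auto
      moreover have "lam / Amin * (Amin * ((?P^2 + ?Q^2) / 2)) = lam * (?P^2 + ?Q^2) / 2"
        using assms by simp
      ultimately show ?thesis by linarith
    qed
    finally show "\<bar>?P\<bar> + \<bar>?Q\<bar> \<le> lam / Amin * (Ax * ((1 + h) * ?P^2 + (1 - h) * ?Q^2)) + 1/lam" .
    show "0 \<le> 1 + Amax / Ainf" using assms by simp
  qed
  finally show ?thesis .
qed



context wsetup begin

theorem main': "\<exists>C C'. C > 0 \<and> C' > 0 \<and>
    (\<forall>t. \<bar>U (0,t) - (- (1 / Ainf) * (LBINT s=0..t. \<phi> s))\<bar> \<le> C * exp (- C' * t))"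
proof -
  have cpt: "compact {0..L}" "{0..L} \<noteq> {}" using L_pos by auto
  obtain x0 where x0: "x0 \<in> {0..L}" "\<forall>y\<in>{0..L}. A x0 \<le> A y"
    using continuous_attains_inf[OF cpt cAx] by blast
  obtain x1 where x1: "x1 \<in> {0..L}" "\<forall>y\<in>{0..L}. A y \<le> A x1"
    using continuous_attains_sup[OF cpt cAx] by blast
  have cabsA': "continuous_on {0..L} (\<lambda>x. \<bar>A' x\<bar>)"
    by (intro continuous_intros continuous_on_subset[OF cA']) auto
  obtain x2 where x2: "x2 \<in> {0..L}" "\<forall>y\<in>{0..L}. \<bar>A' y\<bar> \<le> \<bar>A' x2\<bar>"
    using continuous_attains_sup[OF cpt cabsA'] by blast
  define Amin where "Amin = A x0"
  define Amax where "Amax = A x1"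
  define D where "D = \<bar>A' x2\<bar>"
  have Amin: "Amin > 0" unfolding Amin_def by (rule Apos)
  have bnd: "\<And>x. x \<in> {0..L} \<Longrightarrow> Amin \<le> A x \<and> \<bar>A' x\<bar> \<le> D" and Amax: "\<And>x. x \<in> {0..L} \<Longrightarrow> A x \<le> Amax"
    using x0 x1 x2 unfolding Amin_def D_def Amax_def by auto
  define nu where "nu = 2 * D / Amin + 1"
  have D0: "D \<ge> 0" unfolding D_def by simp
  have nupos: "nu > 0" unfolding nu_def using D0 Amin by (simp add: add_nonneg_pos)
  have nuD: "D \<le> nu * Amin / 2" unfolding nu_def using Amin D0 by (simp add: field_simps)
  define delta where "delta = exp (- (nu * L)) / 2"
  have delta: "delta > 0" "delta * exp (nu * L) \<le> 1/2" unfolding delta_def by (auto simp: exp_minus field_simps)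
  define kappa where "kappa = nu * delta / 4"
  have kpos: "kappa > 0" unfolding kappa_def using nupos delta by simp
  define h where "h x = delta * exp (nu * x)" for x
  define V where "V = Vf h"
  have ly: "\<exists>V'. (V has_real_derivative V') (at t) \<and> (\<phi> t = 0 \<longrightarrow> V' \<le> - kappa * V t)" for t
    unfolding V_def h_def by (rule lyap[OF Amin bnd nuD nupos delta]) (auto simp: kappa_def)
  have hb: "0 \<le> h x" "h x \<le> 1/2" if "x \<in> {0..L}" for x
  proof -
    show "0 \<le> h x" unfolding h_def using delta by simp
    have "exp (nu * x) \<le> exp (nu * L)" using that nupos by (auto intro: mult_left_mono)
    then have "delta * exp (nu * x) \<le> delta * exp (nu * L)" using delta by auto
    then show "h x \<le> 1/2" unfolding h_def using delta by linarith
  qed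
  have contV: "continuous_on S V" for S
    using ly by (meson DERIV_isCont continuous_at_imp_continuous_on)
  have V0: "V t = 0" if "t \<le> 0" for t
  proof -
    have "V t = integral {0..L} (\<lambda>x. 0)" unfolding V_def Vf_def
      by (rule integral_cong) (use that U1_past0 U2_past0 in auto)
    then show ?thesis by simp
  qed
  define T0 where "T0 = b + 1"
  have T0: "T0 > 0" unfolding T0_def using ab by simp
  obtain t3 where t3: "t3 \<in> {0..T0}" "\<forall>y\<in>{0..T0}. V y \<le> V t3"
    using continuous_attains_sup[of "{0..T0}" V] contV T0 by auto
  define Bnd where "Bnd = V t3"
  have Bnd0: "Bnd \<ge> 0"
  proof -
    have "V 0 \<le> V t3" using t3(2) T0 by auto
    then show ?thesis using V0[of 0] unfolding Bnd_def by simp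
  qed
  define B where "B = Bnd * exp (kappa * T0)"
  have B0: "B \<ge> 0" unfolding B_def using Bnd0 by simp
  have late: "exp (kappa * t) * V t \<le> exp (kappa * T0) * V T0" if "t \<ge> T0" for t
  proof (rule DERIV_nonpos_imp_decreasing_open[OF that])
    fix s assume s: "T0 < s" "s < t"
    obtain V' where V': "(V has_real_derivative V') (at s)" "\<phi> s = 0 \<longrightarrow> V' \<le> - kappa * V s"
      using ly by blast
    have "\<phi> s = 0" using ab s unfolding T0_def by auto
    then have V'le: "V' \<le> - kappa * V s" using V' by simp
    have "((\<lambda>s. exp (kappa * s) * V s) has_real_derivative (exp (kappa * s) * kappa * V s + exp (kappa * s) * V')) (at s)"
      by (auto intro!: derivative_eq_intros V'(1))
    moreover have "exp (kappa * s) * kappa * V s + exp (kappa * s) * V' \<le> 0"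
    proof -
      have "exp (kappa * s) * (kappa * V s + V') \<le> 0"
        using V'le by (intro mult_nonneg_nonpos) auto
      then show ?thesis by (simp add: algebra_simps)
    qed
    ultimately show "\<exists>y. ((\<lambda>s. exp (kappa * s) * V s) has_real_derivative y) (at s) \<and> y \<le> 0" by blast
  next
    show "continuous_on {T0..t} (\<lambda>s. exp (kappa * s) * V s)"
      by (intro continuous_intros contV)
  qed
  have Vdec: "V t \<le> B * exp (- kappa * t)" for t
  proof (cases "t \<le> 0")
    case True then show ?thesis using V0 B0 by simp
  next
    case False
    have eB: "B * exp (- kappa * t) = Bnd * exp (kappa * (T0 - t))"
      unfolding B_def by (simp add: mult.assoc exp_add[symmetric] algebra_simps)
    show ?thesis
    proof (cases "t \<le> T0")
      case True
      then have "V t \<le> Bnd" using t3 False unfolding Bnd_def by auto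
      also have "\<dots> \<le> Bnd * exp (kappa * (T0 - t))"
      proof -
        have "1 \<le> exp (kappa * (T0 - t))" using True kpos by simp
        then show ?thesis using Bnd0 by (simp add: mult_le_cancel_left1)
      qed
      finally show ?thesis using eB by simp
    next
      case False
      have "exp (kappa * t) * V t \<le> exp (kappa * T0) * V T0" using late False by simp
      then have "V t \<le> exp (kappa * T0) * V T0 / exp (kappa * t)"
        by (simp add: field_simps)
      also have "\<dots> = exp (kappa * (T0 - t)) * V T0"
        by (simp add: algebra_simps exp_diff)
      also have "\<dots> \<le> exp (kappa * (T0 - t)) * Bnd"
        using t3 T0 unfolding Bnd_def by (intro mult_left_mono) auto
      finally show ?thesis using eB by (simp add: mult.commute)
    qed
  qed
  define K0 where "K0 = 1 + Amax / Ainf"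
  have K0: "K0 > 0" unfolding K0_def using Ainf_pos Amax[of 0] Apos[of 0] L_pos
    by (smt (verit) atLeastAtMost_iff divide_pos_pos)
  have final: "\<bar>U (0,t) - (- (1 / Ainf) * (LBINT s=0..t. \<phi> s))\<bar> \<le> K0 * (B / Amin + L) * exp (- (kappa/2) * t)" for t
  proof -
    define lam where "lam = exp (kappa * t / 2)"
    have lam: "lam > 0" unfolding lam_def by simp
    define F where "F x = U1 (x,t) + (1 / Ainf) * (A x * U2 (x,t))" for x
    define Ig where "Ig x = A x * ((1 + h x) * (U1 (x,t) + U2 (x,t))^2 + (1 - h x) * (U2 (x,t) - U1 (x,t))^2)" for x
    define G where "G x = K0 * (lam / Amin * Ig x + 1/lam)" for x
    have iF: "(F has_integral integral {0..L} F) {0..L}"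
      unfolding F_def
      by (intro integrable_integral integrable_continuous_interval continuous_intros cAx cont_slice1 cU1 cU2)
    have iIg: "(Ig has_integral V t) {0..L}"
    proof -
      have "Ig integrable_on {0..L}" unfolding Ig_def h_def
        by (intro integrable_continuous_interval continuous_intros cAx cont_slice1 cU1 cU2)
      then show ?thesis unfolding V_def Vf_def Ig_def by (simp add: integrable_integral)
    qed
    have iG: "(G has_integral K0 * (lam / Amin * V t + L / lam)) {0..L}"
    proof -
      have c: "((\<lambda>x. 1/lam) has_integral (L / lam)) {0..L}"
        using has_integral_const_real[of "1/lam" 0 L] L_pos by simp
      have "((\<lambda>x. lam / Amin * Ig x + 1/lam) has_integral (lam / Amin * V t + L / lam)) {0..L}"
        by (intro has_integral_add has_integral_mult_right iIg c)
      then have "((\<lambda>x. K0 * (lam / Amin * Ig x + 1/lam)) has_integral K0 * (lam / Amin * V t + L / lam)) {0..L}"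
        by (rule has_integral_mult_right)
      then show ?thesis unfolding G_def .
    qed
    have pwF: "\<bar>F x\<bar> \<le> G x" if x: "x \<in> {0..L}" for x
      unfolding F_def G_def Ig_def K0_def
      by (rule pw_final) (use bnd[OF x] Amax[OF x] Amin Ainf_pos hb[OF x] lam in auto)
    have up: "integral {0..L} F \<le> K0 * (lam / Amin * V t + L / lam)"
      by (rule has_integral_le[OF iF iG]) (use pwF in force)
    have lo: "- integral {0..L} F \<le> K0 * (lam / Amin * V t + L / lam)"
    proof -
      have "((\<lambda>x. - F x) has_integral - integral {0..L} F) {0..L}" by (rule has_integral_neg[OF iF])
      then show ?thesis by (rule has_integral_le[OF _ iG]) (use pwF in force)
    qed
    have "\<bar>U (0,t) - (- (1 / Ainf) * (LBINT s=0..t. \<phi> s))\<bar> = \<bar>integral {0..L} F\<bar>"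
      unfolding identity F_def by simp
    also have "\<dots> \<le> K0 * (lam / Amin * V t + L / lam)" using up lo by linarith
    also have "\<dots> \<le> K0 * (lam / Amin * (B * exp (- kappa * t)) + L / lam)"
      using Vdec[of t] K0 lam Amin by (intro mult_left_mono add_right_mono mult_left_mono) auto
    also have "\<dots> = K0 * (B / Amin + L) * exp (- (kappa/2) * t)"
    proof -
      have "lam * exp (- kappa * t) = exp (- (kappa/2) * t)" unfolding lam_def
        by (simp add: exp_add[symmetric])
      moreover have "1 / lam = exp (- (kappa/2) * t)" unfolding lam_def
        by (simp add: exp_minus field_simps)
      moreover have "lam / Amin * (B * exp (- kappa * t)) = B / Amin * (lam * exp (- kappa * t))" by simp
      moreover have "L / lam = L * (1 / lam)" by simp
      ultimately show ?thesis by (simp add: algebra_simps)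
    qed
    finally show ?thesis .
  qed
  show ?thesis
  proof (intro exI conjI allI)
    show "K0 * (B / Amin + L) + 1 > 0" using K0 B0 Amin L_pos by (simp add: add_nonneg_pos)
    show "kappa / 2 > 0" using kpos by simp
    fix t
    have "K0 * (B / Amin + L) * exp (- (kappa/2) * t) \<le> (K0 * (B / Amin + L) + 1) * exp (- (kappa/2) * t)"
      by (simp add: distrib_right)
    then show "\<bar>U (0,t) - (- (1 / Ainf) * (LBINT s=0..t. \<phi> s))\<bar> \<le> (K0 * (B / Amin + L) + 1) * exp (- (kappa/2) * t)"
      using final[of t] by linarith
  qed
qed

end
theorem mainTheorem13:
  fixes A :: "real \<Rightarrow> real" and Ainf l :: real
    and \<phi> :: "real \<Rightarrow> real" and u :: "real \<Rightarrow> real \<Rightarrow> real"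
  assumes adm: "admissible A Ainf"
    and l_pos: "l > 0"
    and A_l: "\<forall>x. x > l \<longrightarrow> A x = Ainf"
    and phi_smooth: "smooth_real \<phi>"
    and phi_supp: "\<exists>a b. 0 < a \<and> a \<le> b \<and> (\<forall>t. t \<notin> {a..b} \<longrightarrow> \<phi> t = 0)"
    and u_smooth: "smooth_halfplane u"
    and wave: "\<forall>x t. x > 0 \<longrightarrow> boxA A u x t = 0"
    and neumann: "\<forall>t. ((\<lambda>x. u x t) has_real_derivative \<phi> t) (at 0 within {0..})"
    and past: "\<forall>x t. x > 0 \<and> t < 0 \<longrightarrow> u x t = 0"
  shows "\<exists>C C'. C > 0 \<and> C' > 0 \<and>
           (\<forall>t. \<bar>u 0 t - (- (1 / Ainf) * (LBINT s=0..t. \<phi> s))\<bar> \<le> C * exp (- C' * t))"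
proof -
  obtain xm xp where Asm: "smooth_real A" and Apos: "\<And>x. A x > 0" and Ainf: "Ainf > 0"
    and xm: "0 < xm" "\<And>x. x < xm \<Longrightarrow> A x = 1"
    using adm unfolding admissible_def by blast
  obtain a b where ab: "0 < a" "a \<le> b" "\<And>t. t \<notin> {a..b} \<Longrightarrow> \<phi> t = 0"
    using phi_supp by blast
  have dA: "\<And>x. (A has_real_derivative deriv A x) (at x)"
    using Asm unfolding smooth_real_def
    by (metis DERIV_deriv_iff_real_differentiable funpow_0)
  have cA': "continuous_on UNIV (deriv A)"
  proof -
    have "\<And>x. deriv A differentiable at x"
      using Asm unfolding smooth_real_def by (metis funpow_0 funpow_Suc_right o_apply One_nat_def)
    then show ?thesis by (meson continuous_at_imp_continuous_on differentiable_imp_continuous_within)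
  qed
  have cphi: "continuous_on UNIV \<phi>"
  proof -
    have "\<And>x. \<phi> differentiable at x"
      using phi_smooth unfolding smooth_real_def by (metis funpow_0)
    then show ?thesis by (meson continuous_at_imp_continuous_on differentiable_imp_continuous_within)
  qed
  obtain U where sU: "smooth_plane U" and Uu: "\<And>x t. 0 \<le> x \<Longrightarrow> U (x,t) = u x t"
    using u_smooth unfolding smooth_halfplane_def by blast
  have "Ck_plane (Suc (Suc 0)) U" using sU unfolding smooth_plane_def by blast
  then obtain U1 U2 U11 U12 U21 U22 where
    dU: "\<forall>p. (U has_derivative (\<lambda>h. U1 p * fst h + U2 p * snd h)) (at p)"
    and dU1: "\<forall>p. (U1 has_derivative (\<lambda>h. U11 p * fst h + U12 p * snd h)) (at p)"
    and dU2: "\<forall>p. (U2 has_derivative (\<lambda>h. U21 p * fst h + U22 p * snd h)) (at p)"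
    and c: "Ck_plane 0 U11" "Ck_plane 0 U12" "Ck_plane 0 U21" "Ck_plane 0 U22"
    by (auto simp del: Ck_plane.simps(1))
  have pde: "U22 (x,t) = U11 (x,t) + deriv A x / A x * U1 (x,t)" if x: "x > 0" for x t
  proof -
    have e1: "(\<lambda>r. u x r) = (\<lambda>r. U (x,r))" using Uu x by auto
    have e2: "(\<lambda>s. deriv (\<lambda>r. u x r) s) = (\<lambda>s. U2 (x,s))"
      unfolding e1 by (rule ext, rule DERIV_imp_deriv, rule partial2[OF dU])
    have t1: "deriv (\<lambda>s. deriv (\<lambda>r. u x r) s) t = U22 (x,t)"
      unfolding e2 using partial2[OF dU2] by (simp add: DERIV_imp_deriv)
    have e3: "deriv (\<lambda>z. u z t) y = U1 (y,t)" if "y > 0" for y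
    proof -
      have "((\<lambda>z. u z t) has_real_derivative U1 (y,t)) (at y)"
        by (rule has_field_derivative_transform_within_open[OF partial1[OF dU], where S="{0<..}"])
           (use that Uu in auto)
      then show ?thesis by (rule DERIV_imp_deriv)
    qed
    have "((\<lambda>y. A y * U1 (y,t)) has_real_derivative (deriv A x * U1 (x,t) + A x * U11 (x,t))) (at x)"
      using DERIV_mult[OF dA partial1[OF dU1], of t x] by (simp add: mult.commute)
    then have "((\<lambda>y. A y * deriv (\<lambda>z. u z t) y) has_real_derivative (deriv A x * U1 (x,t) + A x * U11 (x,t))) (at x)"
      by (rule has_field_derivative_transform_within_open[where S="{0<..}"]) (use x e3 in auto)
    then have t2: "deriv (\<lambda>y. A y * deriv (\<lambda>z. u z t) y) x = deriv A x * U1 (x,t) + A x * U11 (x,t)"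
      by (rule DERIV_imp_deriv)
    have "boxA A u x t = 0" using wave x by blast
    then have "U22 (x,t) - (1 / A x) * (deriv A x * U1 (x,t) + A x * U11 (x,t)) = 0"
      unfolding boxA_def t1 t2 .
    then show ?thesis using Apos[of x] by (simp add: field_simps)
  qed
  have neu: "U1 (0,t) = \<phi> t" for t
  proof -
    have "((\<lambda>x. U (x,t)) has_real_derivative U1 (0,t)) (at 0 within {0..})"
      using partial1[OF dU] by (rule has_field_derivative_at_within)
    then have "((\<lambda>x. u x t) has_real_derivative U1 (0,t)) (at 0 within {0..})"
      by (rule has_field_derivative_transform_within[of _ _ _ _ 1]) (use Uu in auto)
    moreover have "at (0::real) within {0..} \<noteq> bot"
    proof -
      have "{0::real..} - {0} = {0<..}" by auto
      then show ?thesis by (simp add: at_within_eq_bot_iff)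
    qed
    ultimately show ?thesis using neumann has_field_derivative_unique by blast
  qed
  interpret W: wsetup A "deriv A" Ainf l xm \<phi> a b U U1 U2 U11 U12 U21 U22
    apply unfold_locales
    using dA cA' Apos Ainf xm l_pos A_l cphi ab dU dU1 dU2 c pde neu past Uu by auto
  obtain C C' where "C > 0" "C' > 0"
    "\<forall>t. \<bar>U (0,t) - (- (1 / Ainf) * (LBINT s=0..t. \<phi> s))\<bar> \<le> C * exp (- C' * t)"
    using W.main' by blast
  then show ?thesis using Uu[of 0] by auto
qed


end
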